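(* For every integer $k\ge2$ there is a constant $C>0$ such that for every integer $q\ge2$, every $\alpha\in(0,1/k)$ and all nonnegative integers $n,u,o,\eta,\kappa$, $$p_q(n,u,o,\eta,\kappa)\le\alpha^{(o+\eta)/k}\cdot C^u\cdot(n/\kappa)^\kappa\cdot\left(u/\sqrt{n\eta}\right)^\eta\cdot(u/n)^o,$$ with the convention $x^0=1$ for the factors with exponent $0$.
   Context: Let $n,q,k\in\mathbb{N}$, $\alpha\in(0,1/k)$ with $\alpha n$ an integer. For $\mathbf{u}\in\mathbb{Z}_q^n$ and a $k$-hypermatching $M=(e_1,\dots,e_m)$ on $[n]$ (pairwise disjoint $k$-element subsets, with indicator vectors $\mathbf{e}_i$), let $K_{\mathbf{u}}(M)=\{i\in[m]:\langle\mathbf{u},\mathbf{e}_i\rangle\not\equiv0\pmod q\}$, $E_{\mathbf{u}}(M)=\{j\in[n]:u_j\ne0,\ j\in e_i\text{ for some }i\notin K_{\mathbf{u}}(M)\}$ and $O_{\mathbf{u}}(M)=\{j\in[n]:u_j\ne0,\ j\in e_i\text{ for some }i\in K_{\mathbf{u}}(M)\}$. Define $p_q(n,u,o,\eta,\kappa)=\max_{\mathbf{u}\in(\mathbb{Z}_q\setminus\{0\})^u\times\{0\}^{n-u}}\Pr_M\big[|K_{\mathbf{u}}(M)|=\kappa,\ |E_{\mathbf{u}}(M)|=\eta,\ |O_{\mathbf{u}}(M)|=o\big]$, where $M$ is a uniformly random $k$-hypermatching of size $\alpha n$ on $[n]$. *)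

theory Defs
  imports Complex_Main
begin

text \<open>Ordered k-hypermatchings (e_1,...,e_m) on [n] = {1..n}: lists of m pairwise
disjoint k-element subsets of {1..n}. A uniformly random hypermatching is the uniform
distribution on this finite set.\<close>
definition hypermatchings :: "nat \<Rightarrow> nat \<Rightarrow> nat \<Rightarrow> nat set list set" where
  "hypermatchings k n m = {M. length M = m \<and>
     (\<forall>i<m. M ! i \<subseteq> {1..n} \<and> card (M ! i) = k) \<and>
     (\<forall>i<m. \<forall>j<m. i \<noteq> j \<longrightarrow> M ! i \<inter> M ! j = {})}"

text \<open>Vectors of Z_q^n are represented by functions nat => int with entries in {0..q-1}
on indices 1..n. K_u(M): indices i with <u,e_i> not congruent to 0 mod q.\<close>
definition K_set :: "nat \<Rightarrow> (nat \<Rightarrow> int) \<Rightarrow> nat set list \<Rightarrow> nat set" where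
  "K_set q u M = {i. i < length M \<and> \<not> (int q dvd (\<Sum>j\<in>M ! i. u j))}"

definition E_set :: "nat \<Rightarrow> nat \<Rightarrow> (nat \<Rightarrow> int) \<Rightarrow> nat set list \<Rightarrow> nat set" where
  "E_set q n u M = {j \<in> {1..n}. u j \<noteq> 0 \<and>
     (\<exists>i<length M. i \<notin> K_set q u M \<and> j \<in> M ! i)}"

definition O_set :: "nat \<Rightarrow> nat \<Rightarrow> (nat \<Rightarrow> int) \<Rightarrow> nat set list \<Rightarrow> nat set" where
  "O_set q n u M = {j \<in> {1..n}. u j \<noteq> 0 \<and>
     (\<exists>i<length M. i \<in> K_set q u M \<and> j \<in> M ! i)}"

definition test_vectors :: "nat \<Rightarrow> nat \<Rightarrow> nat \<Rightarrow> (nat \<Rightarrow> int) set" where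
  "test_vectors q n u = {f. u \<le> n \<and>
     (\<forall>j. (1 \<le> j \<and> j \<le> u \<longrightarrow> f j \<in> {1..int q - 1}) \<and>
          (\<not> (1 \<le> j \<and> j \<le> u) \<longrightarrow> f j = 0))}"

definition event_prob ::
  "nat \<Rightarrow> nat \<Rightarrow> nat \<Rightarrow> nat \<Rightarrow> (nat \<Rightarrow> int) \<Rightarrow> nat \<Rightarrow> nat \<Rightarrow> nat \<Rightarrow> real" where
  "event_prob k n m q u oo \<eta> \<kappa> =
     real (card {M \<in> hypermatchings k n m. card (K_set q u M) = \<kappa> \<and>
                  card (E_set q n u M) = \<eta> \<and> card (O_set q n u M) = oo})
     / real (card (hypermatchings k n m))"

text \<open>p_q(n,u,o,eta,kappa), with matchings of size alpha*n (assumed integral).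
The maximum over an empty set of vectors (u > n) is taken to be 0.\<close>
definition p_q ::
  "nat \<Rightarrow> real \<Rightarrow> nat \<Rightarrow> nat \<Rightarrow> nat \<Rightarrow> nat \<Rightarrow> nat \<Rightarrow> nat \<Rightarrow> real" where
  "p_q k \<alpha> q n u oo \<eta> \<kappa> =
     Max (insert 0 ((\<lambda>f. event_prob k n (nat \<lfloor>\<alpha> * real n\<rfloor>) q f oo \<eta> \<kappa>)
                    ` test_vectors q n u))"

end

theory Submission
  imports Defs "HOL-Library.FuncSet"
begin

lemma pow_le_exp_fact: "(x::real) \<ge> 0 \<Longrightarrow> x ^ n \<le> exp x * fact n"
proof -
  assume x: "x \<ge> 0"
  have "(\<Sum>i\<le>n. x ^ i / fact i) \<le> exp x"
    using x summable_exp_generic[of x]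
    by (auto simp: exp_def divide_inverse ac_simps intro!: sum_le_suminf)
  moreover have "x ^ n / fact n \<le> (\<Sum>i\<le>n. x ^ i / fact i)"
    by (rule member_le_sum) (auto simp: x)
  ultimately have "x ^ n / fact n \<le> exp x" by linarith
  thus ?thesis by (simp add: divide_le_eq mult.commute)
qed

lemma binom_real_le: "real (a choose b) \<le> real a ^ b / fact b"
proof -
  have "(a choose b) * fact b \<le> a ^ b" by (rule binomial_fact_pow)
  hence "real (a choose b) * fact b \<le> real a ^ b"
    by (metis of_nat_fact of_nat_le_iff of_nat_mult of_nat_power)
  thus ?thesis by (simp add: le_divide_eq)
qed

lemma ratio_pow_le_exp:
  assumes "1 \<le> r" "r \<le> (e::nat)"
  shows "(real e / real r) ^ r \<le> exp (real e)"
proof -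
  have "real e / real r = 1 + (real e - real r) / real r" using assms by (simp add: field_simps)
  also have "\<dots> \<le> exp ((real e - real r) / real r)" by (rule exp_ge_add_one_self)
  finally have "(real e / real r) ^ r \<le> exp ((real e - real r) / real r) ^ r"
    by (intro power_mono) (use assms in auto)
  also have "\<dots> = exp (real e - real r)" using assms by (simp add: exp_of_nat_mult[symmetric])
  also have "\<dots> \<le> exp (real e)" by simp
  finally show ?thesis .
qed

definition ff :: "nat \<Rightarrow> nat \<Rightarrow> nat" where "ff n t = (\<Prod>s<t. n - s)"

lemma ff_fact_aux: "t \<le> n \<Longrightarrow> fact (n - t) * ff n t = (fact n :: nat)"
proof (induction t)
  case 0 then show ?case by (simp add: ff_def)
next
  case (Suc t)
  have "fact (n - t) = (n - t) * (fact (n - Suc t) :: nat)"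
    using Suc.prems by (metis Suc_diff_Suc Suc_le_lessD fact_Suc of_nat_id)
  moreover have "ff n (Suc t) = ff n t * (n - t)" by (simp add: ff_def)
  ultimately show ?case using Suc by (simp add: ac_simps)
qed

lemma ff_fact: "t \<le> n \<Longrightarrow> ff n t = (n choose t) * fact t"
proof -
  assume "t \<le> n"
  from ff_fact_aux[OF this] binomial_fact_lemma[OF this]
  have "fact (n - t) * ff n t = fact (n - t) * ((n choose t) * fact t)" by (simp add: ac_simps)
  thus ?thesis by (simp add: fact_nonzero)
qed

lemma ff_lower: assumes "t \<le> n" shows "real n ^ t \<le> exp (real t) * real (ff n t)"
proof (cases "t = 0")
  case True then show ?thesis by (simp add: ff_def)
next
  case False
  have "real n ^ t = (real n / real t) ^ t * real t ^ t" using False by (simp add: power_divide)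
  also have "\<dots> \<le> real (n choose t) * (exp (real t) * fact t)"
    by (intro mult_mono binomial_ge_n_over_k_pow_k pow_le_exp_fact assms) auto
  also have "\<dots> = exp (real t) * real (ff n t)" using assms by (simp add: ff_fact)
  finally show ?thesis .
qed

lemma pow_le_exp_fact_nat: "real b ^ b \<le> exp (real b) * fact b"
  by (rule pow_le_exp_fact) simp

lemma part_bound1:
  assumes "c \<le> (b::nat)"
  shows "real (u choose b) * real c ^ b \<le> real u ^ b * exp (real b)"
proof -
  have "real (u choose b) * real c ^ b \<le> (real u ^ b / fact b) * (exp (real b) * fact b)"
    apply (intro mult_mono binom_real_le)
    using pow_le_exp_fact_nat[of b] power_mono[of "real c" "real b" b] assms by auto
  also have "\<dots> = real u ^ b * exp (real b)" by simp
  finally show ?thesis .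
qed

lemma part_bound2:
  assumes "real m \<le> a * real n" "0 \<le> a"
  shows "real (m choose c) \<le> exp (real c) * a ^ c * (real n / real c) ^ c"
proof (cases "c = 0")
  case True then show ?thesis by simp
next
  case False
  have "real (m choose c) \<le> real m ^ c / fact c" by (rule binom_real_le)
  also have "\<dots> \<le> (a * real n) ^ c / fact c"
    by (intro divide_right_mono power_mono assms) auto
  also have "\<dots> \<le> (a * real n) ^ c * exp (real c) / real c ^ c"
  proof -
    have "real c ^ c \<le> exp (real c) * fact c" by (rule pow_le_exp_fact_nat)
    moreover have "0 \<le> (a * real n) ^ c" using assms by simp
    moreover have "0 < real c ^ c" using False by simp
    ultimately show ?thesis
      by (simp add: divide_simps) (metis mult.commute mult_left_mono mult.assoc)
  qed
  also have "\<dots> = exp (real c) * a ^ c * (real n / real c) ^ c"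
    by (simp add: power_divide power_mult_distrib)
  finally show ?thesis .
qed

lemma part_bound5:
  assumes "t \<le> n" "t = 0 \<or> n > 0"
  shows "real k ^ t / real (ff n t) \<le> real k ^ t * exp (real t) / real n ^ t"
proof -
  have pos: "real (ff n t) > 0" using assms
    by (auto simp: ff_def intro!: prod_pos)
  have np: "real n ^ t > 0" using assms by auto
  have "real n ^ t \<le> exp (real t) * real (ff n t)" by (rule ff_lower[OF assms(1)])
  hence "real k ^ t * real n ^ t \<le> real k ^ t * (exp (real t) * real (ff n t))"
    by (intro mult_left_mono) auto
  thus ?thesis using pos np by (simp add: divide_simps ac_simps)
qed

lemma eta_bound:
  assumes "1 \<le> r" "2 * r \<le> \<eta>" "\<eta> \<le> n"
  shows "(real n / real r) ^ r * real u ^ \<eta> / real n ^ \<eta>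
         \<le> exp (real \<eta>) * (real u / sqrt (real n * real \<eta>)) ^ \<eta>"
proof -
  have n1: "real n \<ge> 1" and r1: "real r \<ge> 1" and e1: "real \<eta> \<ge> 1" using assms by auto
  have key: "(real \<eta> / real r) ^ r \<le> exp (real \<eta>)"
    by (rule ratio_pow_le_exp) (use assms in auto)
  define x where "x = (real n / real r) ^ r * sqrt (real n * real \<eta>) ^ \<eta>"
  define y where "y = exp (real \<eta>) * real n ^ \<eta>"
  have x0: "x \<ge> 0" and y0: "y \<ge> 0" unfolding x_def y_def by auto
  have sq: "sqrt (real n * real \<eta>) ^ \<eta> * sqrt (real n * real \<eta>) ^ \<eta> = (real n * real \<eta>) ^ \<eta>"
    by (simp add: power_mult_distrib[symmetric] del: real_sqrt_mult)
  have "x * x = (real n / real r) ^ (2*r) * (real n * real \<eta>) ^ \<eta>"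
    unfolding x_def using sq by (simp add: power_mult power2_eq_square ac_simps)
  also have "\<dots> = real n ^ (2*r) * real \<eta> ^ (2*r) * real \<eta> ^ (\<eta> - 2*r) * real n ^ \<eta> / real r ^ (2*r)"
  proof -
    have "real \<eta> ^ \<eta> = real \<eta> ^ (2*r) * real \<eta> ^ (\<eta> - 2*r)"
      using assms by (simp add: power_add[symmetric])
    thus ?thesis by (simp add: power_divide power_mult_distrib)
  qed
  also have "\<dots> \<le> real n ^ (2*r) * real \<eta> ^ (2*r) * real n ^ (\<eta> - 2*r) * real n ^ \<eta> / real r ^ (2*r)"
    by (intro divide_right_mono mult_right_mono mult_left_mono power_mono) (use assms in auto)
  also have "\<dots> = real n ^ \<eta> * real n ^ \<eta> * ((real \<eta> / real r) ^ r) ^ 2"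
  proof -
    have "real n ^ (2*r) * real n ^ (\<eta> - 2*r) = real n ^ \<eta>"
      using assms by (simp add: power_add[symmetric])
    thus ?thesis by (simp add: power_divide power_mult[symmetric] ac_simps)
  qed
  also have "\<dots> \<le> real n ^ \<eta> * real n ^ \<eta> * (exp (real \<eta>)) ^ 2"
    by (intro mult_left_mono power_mono key) auto
  also have "\<dots> = y * y" unfolding y_def by (simp add: power2_eq_square)
  finally have "x * x \<le> y * y" .
  hence xy: "x \<le> y" using x0 y0 by (metis mult_mono' not_le mult_strict_mono')
  have sp: "sqrt (real n * real \<eta>) ^ \<eta> > 0" using n1 e1 by simp
  have "(real n / real r) ^ r * real u ^ \<eta> / real n ^ \<eta>
        = x * (real u ^ \<eta> / sqrt (real n * real \<eta>) ^ \<eta>) / real n ^ \<eta>"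
    unfolding x_def using sp n1 r1 e1 by (simp add: divide_simps)
  also have "\<dots> \<le> y * (real u ^ \<eta> / sqrt (real n * real \<eta>) ^ \<eta>) / real n ^ \<eta>"
    by (intro divide_right_mono mult_right_mono xy) auto
  also have "\<dots> = exp (real \<eta>) * (real u / sqrt (real n * real \<eta>)) ^ \<eta>"
    unfolding y_def using n1 by (simp add: power_divide)
  finally show ?thesis .
qed

lemma analytic:
  fixes a :: real and k n m u oo \<eta> \<kappa> r :: nat
  assumes a: "0 < a" "a \<le> 1" and m: "real m \<le> a * real n" and k: "k \<ge> 1"
    and ko: "\<kappa> \<le> oo" and re: "2 * r \<le> \<eta>" and ou: "oo + \<eta> \<le> u" and un: "u \<le> n"
    and tk: "oo + \<eta> \<le> k * (\<kappa> + r)"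
  shows "real (u choose oo) * real \<kappa> ^ oo * real (m choose \<kappa>) * (real (u choose \<eta>) * real r ^ \<eta>)
           * real (m choose r) * (real k ^ (oo + \<eta>) / real (ff n (oo + \<eta>)))
         \<le> a powr ((real oo + real \<eta>) / real k) * (exp 6 * real k) ^ u
             * (real n / real \<kappa>) ^ \<kappa>
             * (real u / sqrt (real n * real \<eta>)) ^ \<eta>
             * (real u / real n) ^ oo"
proof -
  define t where "t = oo + \<eta>"
  define R where "R = a powr ((real oo + real \<eta>) / real k) * (exp 6 * real k) ^ u
             * (real n / real \<kappa>) ^ \<kappa>
             * (real u / sqrt (real n * real \<eta>)) ^ \<eta>
             * (real u / real n) ^ oo"
  have R0: "R \<ge> 0" unfolding R_def using a by auto
  show ?thesis
  proof (cases "(0 < oo \<and> \<kappa> = 0) \<or> (0 < \<eta> \<and> r = 0)")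
    case True
    then show ?thesis using R0 unfolding R_def by (auto simp: power_0_left)
  next
    case False
    hence k0: "\<kappa> = 0 \<Longrightarrow> oo = 0" and r0: "r = 0 \<Longrightarrow> \<eta> = 0" by auto
    show ?thesis
    proof (cases "n = 0")
      case True
      then have "u = 0" "oo = 0" "\<eta> = 0" using un ou by auto
      then have "\<kappa> = 0" "r = 0" using ko re by auto
      then show ?thesis using \<open>u = 0\<close> \<open>oo = 0\<close> \<open>\<eta> = 0\<close> a by (simp add: ff_def)
    next
      case False
      hence n1: "real n \<ge> 1" by simp
      have E: "exp (real x) = exp 1 ^ x" for x :: nat by (simp add: exp_of_nat_mult[symmetric])
      define B1 where "B1 = real u ^ oo * exp (real oo)"
      define B2 where "B2 = exp (real \<kappa>) * a ^ \<kappa> * (real n / real \<kappa>) ^ \<kappa>"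
      define B3 where "B3 = real u ^ \<eta> * exp (real \<eta>)"
      define B4 where "B4 = exp (real r) * a ^ r * (real n / real r) ^ r"
      define B5 where "B5 = real k ^ t * exp (real t) / real n ^ t"
      have "real (u choose oo) * real \<kappa> ^ oo * real (m choose \<kappa>) * (real (u choose \<eta>) * real r ^ \<eta>)
           * real (m choose r) * (real k ^ (oo + \<eta>) / real (ff n (oo + \<eta>)))
           \<le> B1 * B2 * B3 * B4 * B5"
      proof -
        have b1: "real (u choose oo) * real \<kappa> ^ oo \<le> B1" unfolding B1_def by (rule part_bound1[OF ko])
        have b3: "real (u choose \<eta>) * real r ^ \<eta> \<le> B3" unfolding B3_def by (rule part_bound1) (use re in auto)
        have b2: "real (m choose \<kappa>) \<le> B2" unfolding B2_def by (rule part_bound2) (use m a in auto)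
        have b4: "real (m choose r) \<le> B4" unfolding B4_def by (rule part_bound2) (use m a in auto)
        have b5: "real k ^ (oo + \<eta>) / real (ff n (oo + \<eta>)) \<le> B5" unfolding B5_def t_def
          by (rule part_bound5) (use ou un False in auto)
        have p: "0 \<le> B1" "0 \<le> B2" "0 \<le> B3" "0 \<le> B4"
          unfolding B1_def B2_def B3_def B4_def using a by auto
        show ?thesis
          by (intro mult_mono b1 b2 b3 b4 b5 p mult_nonneg_nonneg) auto
      qed
      also have "B1 * B2 * B3 * B4 * B5 =
          (exp 1 ^ (oo + \<kappa> + \<eta> + r + t) * real k ^ t) * a ^ (\<kappa> + r) * (real n / real \<kappa>) ^ \<kappa>
          * (real u / real n) ^ oo * ((real n / real r) ^ r * real u ^ \<eta> / real n ^ \<eta>)"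
        unfolding B1_def B2_def B3_def B4_def B5_def t_def E using n1
        by (simp add: power_add power_divide field_simps)
      also have "\<dots> \<le> (exp 1 ^ (oo + \<kappa> + \<eta> + r + t) * real k ^ t) * a powr ((real oo + real \<eta>) / real k)
          * (real n / real \<kappa>) ^ \<kappa>
          * (real u / real n) ^ oo * (exp (real \<eta>) * (real u / sqrt (real n * real \<eta>)) ^ \<eta>)"
      proof -
        have A: "a ^ (\<kappa> + r) \<le> a powr ((real oo + real \<eta>) / real k)"
        proof -
          have "a ^ (\<kappa> + r) = a powr real (\<kappa> + r)" using a powr_realpow[of a "\<kappa> + r"] by (simp only:)
          also have "\<dots> \<le> a powr ((real oo + real \<eta>) / real k)"
          proof (rule powr_mono')
            have "real oo + real \<eta> \<le> real k * real (\<kappa> + r)"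
              using tk by (metis of_nat_add of_nat_le_iff of_nat_mult)
            thus "(real oo + real \<eta>) / real k \<le> real (\<kappa> + r)" using k
              by (simp add: divide_le_eq mult.commute)
          qed (use a in auto)
          finally show ?thesis .
        qed
        have Eb: "(real n / real r) ^ r * real u ^ \<eta> / real n ^ \<eta>
             \<le> exp (real \<eta>) * (real u / sqrt (real n * real \<eta>)) ^ \<eta>"
        proof (cases "\<eta> = 0")
          case True then show ?thesis using re by simp
        next
          case False
          then show ?thesis using r0 re ou un by (intro eta_bound) (auto simp: Suc_le_eq)
        qed
        show ?thesis
          by (intro mult_mono A Eb order_refl) (use a n1 in auto)
      qed
      also have "\<dots> = (exp 1 ^ (oo + \<kappa> + \<eta> + r + t + \<eta>) * real k ^ t) * a powr ((real oo + real \<eta>) / real k)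
          * (real n / real \<kappa>) ^ \<kappa>
          * (real u / real n) ^ oo * (real u / sqrt (real n * real \<eta>)) ^ \<eta>"
        by (simp add: E power_add)
      also have "\<dots> \<le> (exp 6 * real k) ^ u * a powr ((real oo + real \<eta>) / real k)
          * (real n / real \<kappa>) ^ \<kappa>
          * (real u / real n) ^ oo * (real u / sqrt (real n * real \<eta>)) ^ \<eta>"
      proof -
        have "(exp 1::real) ^ (oo + \<kappa> + \<eta> + r + t + \<eta>) \<le> exp 1 ^ (6 * u)"
          using ko re ou unfolding t_def by (intro power_increasing) auto
        also have "\<dots> = (exp 6::real) ^ u" by (simp add: power_mult exp_of_nat_mult[symmetric])
        finally have e6: "(exp 1::real) ^ (oo + \<kappa> + \<eta> + r + t + \<eta>) \<le> exp 6 ^ u" .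
        have "real k ^ t \<le> real k ^ u" using ou k unfolding t_def by (intro power_increasing) auto
        with e6 have "exp 1 ^ (oo + \<kappa> + \<eta> + r + t + \<eta>) * real k ^ t \<le> (exp 6 * real k) ^ u"
          by (simp add: power_mult_distrib mult_mono)
        thus ?thesis by (intro mult_right_mono) (use a n1 in auto)
      qed
      finally show ?thesis by (simp add: ac_simps)
    qed
  qed
qed

definition sw :: "nat \<Rightarrow> nat \<Rightarrow> nat \<Rightarrow> nat" where
  "sw a b x = (if x = a then b else if x = b then a else x)"

definition swM :: "nat \<Rightarrow> nat \<Rightarrow> nat set list \<Rightarrow> nat set list" where
  "swM a b M = map (\<lambda>S. sw a b ` S) M"

lemma sw_sw[simp]: "sw a b (sw a b x) = x" by (simp add: sw_def)
lemma inj_sw: "inj (sw a b)" by (metis injI sw_sw)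
lemma sw_img_img[simp]: "sw a b ` sw a b ` S = S" by (simp add: image_comp comp_def)
lemma swM_swM[simp]: "swM a b (swM a b M) = M" by (simp add: swM_def comp_def)

definition Sfix :: "nat \<Rightarrow> nat \<Rightarrow> nat \<Rightarrow> nat set \<Rightarrow> (nat \<Rightarrow> nat) \<Rightarrow> nat set list set" where
  "Sfix k n m T g = {M \<in> hypermatchings k n m. \<forall>j\<in>T. g j < m \<and> j \<in> M ! (g j)}"

lemma finite_hm: "finite (hypermatchings k n m)"
proof -
  have "hypermatchings k n m \<subseteq> {xs. set xs \<subseteq> Pow {1..n} \<and> length xs = m}"
  proof
    fix M assume M: "M \<in> hypermatchings k n m"
    have "S \<subseteq> {1..n}" if "S \<in> set M" for S
      using M that unfolding hypermatchings_def in_set_conv_nth by auto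
    thus "M \<in> {xs. set xs \<subseteq> Pow {1..n} \<and> length xs = m}"
      using M by (auto simp: hypermatchings_def)
  qed
  moreover have "finite {xs. set xs \<subseteq> Pow {1..n} \<and> length xs = m}"
    by (rule finite_lists_length_eq) simp
  ultimately show ?thesis by (rule finite_subset)
qed

lemma swM_hm:
  assumes "M \<in> hypermatchings k n m" "a \<in> {1..n}" "b \<in> {1..n}"
  shows "swM a b M \<in> hypermatchings k n m"
proof -
  have sub: "sw a b ` S \<subseteq> {1..n}" if "S \<subseteq> {1..n}" for S
    using that assms(2,3) by (auto simp: sw_def)
  have cd: "card (sw a b ` S) = card S" for S
    by (rule card_image) (rule inj_on_subset[OF inj_sw], simp)
  have dj: "sw a b ` S \<inter> sw a b ` S' = {}" if "S \<inter> S' = {}" for S S'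
    using that by (simp add: image_Int[OF inj_sw, symmetric])
  show ?thesis using assms(1) sub cd dj by (auto simp: hypermatchings_def swM_def)
qed

lemma swM_nth: "i < length M \<Longrightarrow> swM a b M ! i = sw a b ` (M ! i)"
  by (simp add: swM_def)

lemma card_swap_eq:
  assumes j: "j \<in> {1..n}" "j \<notin> T" and j': "j' \<in> {1..n}" "j' \<notin> T" and i: "i < m"
  shows "card {M \<in> Sfix k n m T g. j' \<in> M ! i} = card {M \<in> Sfix k n m T g. j \<in> M ! i}"
proof -
  have len: "length M = m" if "M \<in> Sfix k n m T g" for M
    using that by (simp add: Sfix_def hypermatchings_def)
  have inS: "swM j j' M \<in> Sfix k n m T g" if M: "M \<in> Sfix k n m T g" for M
  proof -
    have H: "M \<in> hypermatchings k n m" and P: "\<forall>x\<in>T. g x < m \<and> x \<in> M ! g x"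
      using M by (auto simp: Sfix_def)
    have "x \<in> swM j j' M ! g x" if x: "x \<in> T" for x
    proof -
      have "g x < length M" using P x len[OF M] by auto
      hence "swM j j' M ! g x = sw j j' ` (M ! g x)" by (rule swM_nth)
      moreover have "sw j j' x = x" using x j j' by (auto simp: sw_def)
      moreover have "x \<in> M ! g x" using P x by auto
      ultimately show ?thesis by (metis image_eqI)
    qed
    thus ?thesis using swM_hm[OF H j(1) j'(1)] P by (simp add: Sfix_def)
  qed
  have sj: "sw j j' j = j'" "sw j j' j' = j" by (auto simp: sw_def)
  have "bij_betw (swM j j') {M \<in> Sfix k n m T g. j \<in> M ! i} {M \<in> Sfix k n m T g. j' \<in> M ! i}"
  proof (rule bij_betw_byWitness[where f' = "swM j j'"])
    show "swM j j' ` {M \<in> Sfix k n m T g. j \<in> M ! i} \<subseteq> {M \<in> Sfix k n m T g. j' \<in> M ! i}"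
    proof clarify
      fix M assume M: "M \<in> Sfix k n m T g" "j \<in> M ! i"
      have "swM j j' M ! i = sw j j' ` (M ! i)" using len[OF M(1)] i by (simp add: swM_nth)
      hence "j' \<in> swM j j' M ! i" using M(2) sj by (metis image_eqI)
      thus "swM j j' M \<in> Sfix k n m T g \<and> j' \<in> swM j j' M ! i" using inS[OF M(1)] by simp
    qed
    show "swM j j' ` {M \<in> Sfix k n m T g. j' \<in> M ! i} \<subseteq> {M \<in> Sfix k n m T g. j \<in> M ! i}"
    proof clarify
      fix M assume M: "M \<in> Sfix k n m T g" "j' \<in> M ! i"
      have "swM j j' M ! i = sw j j' ` (M ! i)" using len[OF M(1)] i by (simp add: swM_nth)
      hence "j \<in> swM j j' M ! i" using M(2) sj by (metis image_eqI)
      thus "swM j j' M \<in> Sfix k n m T g \<and> j \<in> swM j j' M ! i" using inS[OF M(1)] by simp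
    qed
  qed auto
  from bij_betw_same_card[OF this] show ?thesis by simp
qed

lemma core:
  assumes "finite T" "T \<subseteq> {1..n}"
  shows "card (Sfix k n m T g) * ff n (card T) \<le> k ^ card T * card (hypermatchings k n m)"
  using assms
proof (induction T rule: finite_induct)
  case empty
  then show ?case by (simp add: Sfix_def ff_def)
next
  case (insert j T)
  let ?S = "Sfix k n m T g"
  define i where "i = g j"
  have fS: "finite ?S" using finite_hm by (rule finite_subset[rotated]) (auto simp: Sfix_def)
  have IH: "card ?S * ff n (card T) \<le> k ^ card T * card (hypermatchings k n m)"
    using insert by auto
  show ?case
  proof (cases "i < m")
    case False
    then have "Sfix k n m (insert j T) g = {}" by (auto simp: Sfix_def i_def)
    then show ?thesis by simp
  next
    case True
    have eq: "Sfix k n m (insert j T) g = {M \<in> ?S. j \<in> M ! i}"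
      using True by (auto simp: Sfix_def i_def)
    define c where "c = card {M \<in> ?S. j \<in> M ! i}"
    define D where "D = {1..n} - T"
    have fD: "finite D" by (simp add: D_def)
    have jD: "j \<in> D" using insert by (auto simp: D_def)
    have cD: "card D = n - card T" using insert by (simp add: D_def card_Diff_subset)
    have "(\<Sum>M\<in>?S. card {j'\<in>D. j' \<in> M ! i}) = (\<Sum>j'\<in>D. card {M\<in>?S. j' \<in> M ! i})"
      by (rule sum_multicount_gen[OF fS fD]) auto
    also have "\<dots> = (\<Sum>j'\<in>D. c)"
      unfolding c_def
      by (rule sum.cong[OF refl], rule card_swap_eq) (use insert jD True in \<open>auto simp: D_def\<close>)
    also have "\<dots> = card D * c" by simp
    finally have dc: "card D * c = (\<Sum>M\<in>?S. card {j'\<in>D. j' \<in> M ! i})" by simp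
    have "(\<Sum>M\<in>?S. card {j'\<in>D. j' \<in> M ! i}) \<le> (\<Sum>M\<in>?S. k)"
    proof (rule sum_mono)
      fix M assume M: "M \<in> ?S"
      then have ck: "card (M ! i) = k" and sub: "M ! i \<subseteq> {1..n}"
        using True by (auto simp: Sfix_def hypermatchings_def)
      have fin: "finite (M ! i)" using finite_subset[OF sub] by simp
      have s2: "{j'\<in>D. j' \<in> M ! i} \<subseteq> M ! i" by auto
      from card_mono[OF fin s2] ck show "card {j'\<in>D. j' \<in> M ! i} \<le> k" by simp
    qed
    hence "card D * c \<le> k * card ?S" using dc by (simp add: mult.commute)
    hence "c * (n - card T) \<le> k * card ?S" using cD by (simp add: mult.commute)
    have ffS: "ff n (card (insert j T)) = ff n (card T) * (n - card T)"
      using insert by (simp add: ff_def)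
    have "card (Sfix k n m (insert j T) g) * ff n (card (insert j T)) = (c * (n - card T)) * ff n (card T)"
      using eq ffS c_def by (simp add: ac_simps)
    also have "\<dots> \<le> (k * card ?S) * ff n (card T)"
      using \<open>c * (n - card T) \<le> k * card ?S\<close> by (rule mult_right_mono) simp
    also have "\<dots> = k * (card ?S * ff n (card T))" by simp
    also have "\<dots> \<le> k * (k ^ card T * card (hypermatchings k n m))"
      using IH by (rule mult_left_mono) simp
    also have "\<dots> = k ^ card (insert j T) * card (hypermatchings k n m)"
      using insert by simp
    finally show ?thesis .
  qed
qed

lemma card_fibres: "finite S \<Longrightarrow> card S = (\<Sum>y\<in>g ` S. card {x\<in>S. g x = y})"
  using sum.image_gen[of S "\<lambda>_. 1::nat" g] by simp

lemma fin_sub1: "X \<subseteq> {a..b::nat} \<Longrightarrow> finite X" by (rule finite_subset) auto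
lemma fin_sub2: "X \<subseteq> {..<b::nat} \<Longrightarrow> finite X" by (rule finite_subset) auto

definition Fn :: "nat \<Rightarrow> nat set \<Rightarrow> nat \<Rightarrow> (nat \<Rightarrow> nat) set" where
  "Fn m A b = {g \<in> A \<rightarrow>\<^sub>E {..<m}. card (g ` A) = b}"

lemma card_Fn: assumes "finite A" shows "card (Fn m A b) \<le> (m choose b) * b ^ card A"
proof -
  let ?Bs = "{B. B \<subseteq> {..<m} \<and> card B = b}"
  have sub: "Fn m A b \<subseteq> (\<Union>B\<in>?Bs. A \<rightarrow>\<^sub>E B)"
  proof
    fix g assume g: "g \<in> Fn m A b"
    then have "g ` A \<in> ?Bs" "g \<in> A \<rightarrow>\<^sub>E g ` A" by (auto simp: Fn_def PiE_def Pi_def)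
    thus "g \<in> (\<Union>B\<in>?Bs. A \<rightarrow>\<^sub>E B)" by blast
  qed
  have fB: "finite ?Bs" by simp
  have "card (Fn m A b) \<le> card (\<Union>B\<in>?Bs. A \<rightarrow>\<^sub>E B)"
    by (rule card_mono[OF _ sub]) (use assms fB in \<open>auto intro!: finite_PiE dest: fin_sub2\<close>)
  also have "\<dots> \<le> (\<Sum>B\<in>?Bs. card (A \<rightarrow>\<^sub>E B))" by (rule card_UN_le[OF fB])
  also have "\<dots> = (\<Sum>B\<in>?Bs. b ^ card A)"
    by (rule sum.cong) (use assms in \<open>auto simp: card_PiE\<close>)
  also have "\<dots> = (m choose b) * b ^ card A" using n_subsets[of "{..<m}" b] by simp
  finally show ?thesis .
qed

lemma finite_Fn: "finite A \<Longrightarrow> finite (Fn m A b)"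
  unfolding Fn_def by (rule finite_subset[of _ "A \<rightarrow>\<^sub>E {..<m}"]) (auto intro!: finite_PiE)

definition Cfg :: "nat \<Rightarrow> nat \<Rightarrow> nat \<Rightarrow> nat \<Rightarrow> nat \<Rightarrow> nat \<Rightarrow>
    (nat set \<times> nat set \<times> (nat \<Rightarrow> nat) \<times> (nat \<Rightarrow> nat)) set" where
  "Cfg m u oo \<eta> \<kappa> r = (SIGMA TO:{X. X \<subseteq> {1..u} \<and> card X = oo}.
      SIGMA TE:{Y. Y \<subseteq> {1..u} \<and> card Y = \<eta> \<and> TO \<inter> Y = {}}. Fn m TO \<kappa> \<times> Fn m TE r)"

lemma finite_Cfg: "finite (Cfg m u oo \<eta> \<kappa> r)"
  unfolding Cfg_def
  by (intro finite_SigmaI finite_cartesian_product finite_Fn) (auto dest: fin_sub1 simp: finite_Collect_subsets)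

lemma card_Cfg: "card (Cfg m u oo \<eta> \<kappa> r) \<le>
    (u choose oo) * (u choose \<eta>) * ((m choose \<kappa>) * \<kappa> ^ oo) * ((m choose r) * r ^ \<eta>)"
proof -
  let ?A = "{X. X \<subseteq> {1..u} \<and> card X = oo}"
  let ?B = "\<lambda>TO. {Y. Y \<subseteq> {1..u} \<and> card Y = \<eta> \<and> TO \<inter> Y = {}}"
  have fA: "finite ?A" by (simp add: finite_Collect_subsets)
  have fB: "finite (?B TO)" for TO by (rule finite_subset[of _ "Pow {1..u}"]) auto
  have finX: "X \<in> ?A \<Longrightarrow> finite X" for X by (auto dest: fin_sub1)
  have finY: "Y \<in> ?B TO \<Longrightarrow> finite Y" for Y TO by (auto dest: fin_sub1)
  have cA: "card ?A = u choose oo" using n_subsets[of "{1..u}" oo] by simp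
  have cB: "card (?B TO) \<le> u choose \<eta>" for TO
  proof -
    have "card (?B TO) \<le> card {Y. Y \<subseteq> {1..u} \<and> card Y = \<eta>}"
      by (rule card_mono) (auto simp: finite_Collect_subsets)
    thus ?thesis using n_subsets[of "{1..u}" \<eta>] by simp
  qed
  have inner: "card (Fn m TO \<kappa> \<times> Fn m TE r) \<le> ((m choose \<kappa>) * \<kappa> ^ oo) * ((m choose r) * r ^ \<eta>)"
    if "TO \<in> ?A" "TE \<in> ?B TO" for TO TE
  proof -
    have "card (Fn m TO \<kappa>) \<le> (m choose \<kappa>) * \<kappa> ^ oo"
      using card_Fn[OF finX[OF that(1)], of m \<kappa>] that by simp
    moreover have "card (Fn m TE r) \<le> (m choose r) * r ^ \<eta>"
      using card_Fn[OF finY[OF that(2)], of m r] that by simp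
    ultimately show ?thesis by (simp add: card_cartesian_product mult_le_mono)
  qed
  have "card (Cfg m u oo \<eta> \<kappa> r) = (\<Sum>TO\<in>?A. \<Sum>TE\<in>?B TO. card (Fn m TO \<kappa> \<times> Fn m TE r))"
  proof -
    have fF: "finite (Fn m TO \<kappa> \<times> Fn m TE r)" if "TO \<in> ?A" "TE \<in> ?B TO" for TO TE
      using finite_Fn[OF finX[OF that(1)]] finite_Fn[OF finY[OF that(2)]] by (rule finite_cartesian_product)
    have inn: "card (SIGMA TE:?B TO. Fn m TO \<kappa> \<times> Fn m TE r) = (\<Sum>TE\<in>?B TO. card (Fn m TO \<kappa> \<times> Fn m TE r))"
      if "TO \<in> ?A" for TO
      by (rule card_SigmaI) (use fB fF that in auto)
    have fS: "finite (SIGMA TE:?B TO. Fn m TO \<kappa> \<times> Fn m TE r)" if "TO \<in> ?A" for TO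
      by (rule finite_SigmaI) (use fB fF that in auto)
    have "card (Cfg m u oo \<eta> \<kappa> r) = (\<Sum>TO\<in>?A. card (SIGMA TE:?B TO. Fn m TO \<kappa> \<times> Fn m TE r))"
      unfolding Cfg_def by (rule card_SigmaI) (use fA fS in auto)
    also have "\<dots> = (\<Sum>TO\<in>?A. \<Sum>TE\<in>?B TO. card (Fn m TO \<kappa> \<times> Fn m TE r))"
      by (rule sum.cong[OF refl]) (rule inn)
    finally show ?thesis .
  qed
  also have "\<dots> \<le> (\<Sum>TO\<in>?A. \<Sum>TE\<in>?B TO. ((m choose \<kappa>) * \<kappa> ^ oo) * ((m choose r) * r ^ \<eta>))"
    by (intro sum_mono inner) auto
  also have "\<dots> \<le> (\<Sum>TO\<in>?A. (u choose \<eta>) * (((m choose \<kappa>) * \<kappa> ^ oo) * ((m choose r) * r ^ \<eta>)))"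
    proof (intro sum_mono)
    fix TO show "(\<Sum>TE\<in>?B TO. ((m choose \<kappa>) * \<kappa> ^ oo) * ((m choose r) * r ^ \<eta>))
      \<le> (u choose \<eta>) * (((m choose \<kappa>) * \<kappa> ^ oo) * ((m choose r) * r ^ \<eta>))"
      using mult_right_mono[OF cB[of TO], of "((m choose \<kappa>) * \<kappa> ^ oo) * ((m choose r) * r ^ \<eta>)"]
      by (simp only: sum_constant) simp
  qed
  also have "\<dots> = (u choose oo) * (u choose \<eta>) * ((m choose \<kappa>) * \<kappa> ^ oo) * ((m choose r) * r ^ \<eta>)"
    using cA by (simp add: ac_simps)
  finally show ?thesis .
qed

definition SC :: "nat \<Rightarrow> nat \<Rightarrow> nat \<Rightarrow> (nat set \<times> nat set \<times> (nat \<Rightarrow> nat) \<times> (nat \<Rightarrow> nat)) \<Rightarrow> nat set list set" where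
  "SC k n m x = (case x of (TO, TE, g1, g2) \<Rightarrow> Sfix k n m (TO \<union> TE) (\<lambda>j. if j \<in> TO then g1 j else g2 j))"

lemma ev_subset:
  assumes f: "f \<in> test_vectors q n u" and M: "M \<in> hypermatchings k n m"
    and cK: "card (K_set q f M) = \<kappa>" and cE: "card (E_set q n f M) = \<eta>" and cO: "card (O_set q n f M) = oo"
  shows "\<exists>r. 2 * r \<le> \<eta> \<and> oo + \<eta> \<le> k * (\<kappa> + r) \<and> (\<exists>x\<in>Cfg m u oo \<eta> \<kappa> r. M \<in> SC k n m x)"
proof -
  have fnz: "1 \<le> j \<and> j \<le> u \<and> 0 < f j \<and> f j < int q" if "f j \<noteq> 0" for j
  proof -
    have "\<forall>j. (1 \<le> j \<and> j \<le> u \<longrightarrow> f j \<in> {1..int q - 1}) \<and> (\<not> (1 \<le> j \<and> j \<le> u) \<longrightarrow> f j = 0)"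
      using f by (simp add: test_vectors_def)
    then show ?thesis using that by fastforce
  qed
  have len: "length M = m" using M by (simp add: hypermatchings_def)
  have blk: "M ! i \<subseteq> {1..n}" "card (M ! i) = k" if "i < m" for i
    using M that by (auto simp: hypermatchings_def)
  have dis: "i = i'" if "i < m" "i' < m" "j \<in> M ! i" "j \<in> M ! i'" for i i' j
  proof (rule ccontr)
    assume "i \<noteq> i'"
    then have "M ! i \<inter> M ! i' = {}" using M that(1,2) by (simp add: hypermatchings_def)
    with that(3,4) show False by blast
  qed
  define G where "G j = (SOME i. i < m \<and> j \<in> M ! i)" for j
  have Gp: "G j < m \<and> j \<in> M ! (G j)" if "i < m" "j \<in> M ! i" for i j
    unfolding G_def by (rule someI[of _ i]) (use that in auto)
  have Gu: "G j = i" if "i < m" "j \<in> M ! i" for i j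
    using Gp[OF that] dis that by blast
  define K where "K = K_set q f M"
  define OS where "OS = O_set q n f M"
  define ES where "ES = E_set q n f M"
  have Kdef: "i \<in> K \<longleftrightarrow> i < m \<and> \<not> int q dvd (\<Sum>j\<in>M ! i. f j)" for i
    by (simp add: K_def K_set_def len)
  have Odef: "j \<in> OS \<longleftrightarrow> j \<in> {1..n} \<and> f j \<noteq> 0 \<and> (\<exists>i<m. i \<in> K \<and> j \<in> M ! i)" for j
    by (simp add: OS_def O_set_def K_def len)
  have Edef: "j \<in> ES \<longleftrightarrow> j \<in> {1..n} \<and> f j \<noteq> 0 \<and> (\<exists>i<m. i \<notin> K \<and> j \<in> M ! i)" for j
    by (simp add: ES_def E_set_def K_def len)
  have Ou: "OS \<subseteq> {1..u}" using fnz by (auto simp: Odef)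
  have Eu: "ES \<subseteq> {1..u}" using fnz by (auto simp: Edef)
  have OE: "OS \<inter> ES = {}"
  proof (rule ccontr)
    assume "OS \<inter> ES \<noteq> {}"
    then obtain j where "j \<in> OS" "j \<in> ES" by blast
    then obtain i i' where "i < m" "i \<in> K" "j \<in> M ! i" "i' < m" "i' \<notin> K" "j \<in> M ! i'"
      by (auto simp: Odef Edef)
    with dis show False by blast
  qed
  have GO: "G j < m \<and> j \<in> M ! G j \<and> G j \<in> K" if "j \<in> OS" for j
    using that Gp Gu by (auto simp: Odef)
  have GE: "G j < m \<and> j \<in> M ! G j \<and> G j \<notin> K" if "j \<in> ES" for j
    using that Gp Gu by (auto simp: Edef)
  have GOK: "G ` OS = K"
  proof
    show "G ` OS \<subseteq> K" using GO by auto
    show "K \<subseteq> G ` OS"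
    proof
      fix i assume iK: "i \<in> K"
      then have im: "i < m" and nd: "\<not> int q dvd (\<Sum>j\<in>M ! i. f j)" by (auto simp: Kdef)
      have "\<exists>j\<in>M ! i. f j \<noteq> 0"
      proof (rule ccontr)
        assume "\<not> (\<exists>j\<in>M ! i. f j \<noteq> 0)"
        then have "(\<Sum>j\<in>M ! i. f j) = 0" by simp
        with nd show False by simp
      qed
      then obtain j where j: "j \<in> M ! i" "f j \<noteq> 0" by blast
      have "j \<in> OS" using j blk(1)[OF im] im iK by (auto simp: Odef)
      moreover have "G j = i" using Gu[OF im j(1)] .
      ultimately show "i \<in> G ` OS" by (metis imageI)
    qed
  qed
  have finO: "finite OS" using Ou by (rule fin_sub1)
  have finE: "finite ES" using Eu by (rule fin_sub1)
  define r where "r = card (G ` ES)"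
  have fib2: "2 \<le> card {j \<in> ES. G j = i}" if iG: "i \<in> G ` ES" for i
  proof (rule ccontr)
    assume "\<not> 2 \<le> card {j \<in> ES. G j = i}"
    then have le1: "card {j \<in> ES. G j = i} \<le> 1" by simp
    obtain j0 where j0: "j0 \<in> ES" "G j0 = i" using iG by blast
    have fin: "finite {j \<in> ES. G j = i}" using finE by simp
    have F1: "{j \<in> ES. G j = i} = {j0}"
    proof -
      have "j0 \<in> {j \<in> ES. G j = i}" using j0 by simp
      moreover have "\<forall>a\<in>{j \<in> ES. G j = i}. \<forall>b\<in>{j \<in> ES. G j = i}. a = b"
        using card_le_Suc0_iff_eq[OF fin] le1 by simp
      ultimately show ?thesis by blast
    qed
    have im: "i < m" "j0 \<in> M ! i" "i \<notin> K" using GE[OF j0(1)] j0(2) by auto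
    have zero: "f j = 0" if "j \<in> M ! i - {j0}" for j
    proof (rule ccontr)
      assume "f j \<noteq> 0"
      then have "j \<in> ES" using that im blk(1)[OF im(1)] by (auto simp: Edef)
      moreover have "G j = i" using Gu[OF im(1)] that by auto
      ultimately have "j \<in> {j \<in> ES. G j = i}" by simp
      with F1 that show False by simp
    qed
    have finB: "finite (M ! i)" using blk(1)[OF im(1)] by (rule fin_sub1)
    have "(\<Sum>j\<in>M ! i. f j) = (\<Sum>j\<in>{j0}. f j)"
      by (rule sum.mono_neutral_right[OF finB]) (use im zero in auto)
    then have s: "(\<Sum>j\<in>M ! i. f j) = f j0" by simp
    have "f j0 \<noteq> 0" using j0(1) by (simp add: Edef)
    then have pos: "0 < f j0" "f j0 < int q" using fnz by auto
    have "int q dvd f j0" using im(1,3) s by (simp add: Kdef)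
    then have "int q \<le> f j0" using pos(1) by (rule zdvd_imp_le)
    with pos(2) show False by simp
  qed
  have r2: "2 * r \<le> \<eta>"
  proof -
    have "2 * r = (\<Sum>i\<in>G ` ES. 2)" by (simp add: r_def)
    also have "\<dots> \<le> (\<Sum>i\<in>G ` ES. card {j \<in> ES. G j = i})" by (rule sum_mono) (rule fib2)
    also have "\<dots> = card ES" by (rule card_fibres[OF finE, symmetric])
    finally show ?thesis using cE ES_def by simp
  qed
  have tk: "oo + \<eta> \<le> k * (\<kappa> + r)"
  proof -
    have finT: "finite (OS \<union> ES)" using finO finE by simp
    have "oo + \<eta> = card (OS \<union> ES)" using cO cE OS_def ES_def card_Un_disjoint[OF finO finE OE] by simp
    also have "\<dots> = (\<Sum>i\<in>G ` (OS \<union> ES). card {j \<in> OS \<union> ES. G j = i})" by (rule card_fibres[OF finT])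
    also have "\<dots> \<le> (\<Sum>i\<in>G ` (OS \<union> ES). k)"
    proof (rule sum_mono)
      fix i assume "i \<in> G ` (OS \<union> ES)"
      then obtain j0 where j0: "j0 \<in> OS \<union> ES" "G j0 = i" by blast
      then have im: "i < m" using GO GE by auto
      have "{j \<in> OS \<union> ES. G j = i} \<subseteq> M ! i" using GO GE by auto
      from card_mono[OF fin_sub1[OF blk(1)[OF im]] this] blk(2)[OF im]
      show "card {j \<in> OS \<union> ES. G j = i} \<le> k" by simp
    qed
    also have "\<dots> = k * card (G ` (OS \<union> ES))" by simp
    also have "\<dots> \<le> k * (\<kappa> + r)"
    proof -
      have "card (G ` (OS \<union> ES)) \<le> card (G ` OS) + card (G ` ES)"
        by (simp add: image_Un card_Un_le)
      then show ?thesis using GOK cK K_def r_def by (simp add: mult_le_mono2)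
    qed
    finally show ?thesis .
  qed
  define x where "x = (OS, ES, restrict G OS, restrict G ES)"
  have resO: "restrict G OS ` OS = G ` OS" by auto
  have resE: "restrict G ES ` ES = G ` ES" by auto
  have "x \<in> Cfg m u oo \<eta> \<kappa> r"
    unfolding x_def Cfg_def Fn_def using Ou Eu OE cO cE OS_def ES_def GO GE resO resE GOK cK K_def r_def
    by (auto simp: PiE_def Pi_def)
  moreover have "M \<in> SC k n m x"
  proof -
    have "\<forall>j\<in>OS \<union> ES. (if j \<in> OS then restrict G OS j else restrict G ES j) < m \<and>
          j \<in> M ! (if j \<in> OS then restrict G OS j else restrict G ES j)"
    proof
      fix j assume j: "j \<in> OS \<union> ES"
      show "(if j \<in> OS then restrict G OS j else restrict G ES j) < m \<and>
          j \<in> M ! (if j \<in> OS then restrict G OS j else restrict G ES j)"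
      proof (cases "j \<in> OS")
        case True then show ?thesis using GO[OF True] by simp
      next
        case False then have "j \<in> ES" using j by simp
        then show ?thesis using GE[OF \<open>j \<in> ES\<close>] False by simp
      qed
    qed
    then show ?thesis unfolding x_def SC_def Sfix_def using M by simp
  qed
  ultimately show ?thesis using r2 tk by blast
qed

lemma Cfg_t: assumes "x \<in> Cfg m u oo \<eta> \<kappa> r"
  shows "oo + \<eta> \<le> u" and "case x of (TO, TE, g1, g2) \<Rightarrow> TO \<union> TE \<subseteq> {1..u} \<and> card (TO \<union> TE) = oo + \<eta>"
proof -
  obtain TO TE g1 g2 where x: "x = (TO, TE, g1, g2)" by (metis prod_cases4)
  have TO: "TO \<subseteq> {1..u}" "card TO = oo" and TE: "TE \<subseteq> {1..u}" "card TE = \<eta>" "TO \<inter> TE = {}"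
    using assms by (auto simp: x Cfg_def)
  have c: "card (TO \<union> TE) = oo + \<eta>"
    using card_Un_disjoint[OF fin_sub1[OF TO(1)] fin_sub1[OF TE(1)] TE(3)] TO TE by simp
  have "card (TO \<union> TE) \<le> card {1..u}" by (rule card_mono) (use TO TE in auto)
  then show "oo + \<eta> \<le> u" using c by simp
  show "case x of (TO, TE, g1, g2) \<Rightarrow> TO \<union> TE \<subseteq> {1..u} \<and> card (TO \<union> TE) = oo + \<eta>"
    using x TO TE c by simp
qed

lemma SC_bound:
  assumes x: "x \<in> Cfg m u oo \<eta> \<kappa> r" and un: "u \<le> n"
  shows "real (card (SC k n m x)) \<le> real k ^ (oo + \<eta>) * real (card (hypermatchings k n m)) / real (ff n (oo + \<eta>))"
proof -
  obtain TO TE g1 g2 where xe: "x = (TO, TE, g1, g2)" by (metis prod_cases4)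
  have T: "TO \<union> TE \<subseteq> {1..u}" "card (TO \<union> TE) = oo + \<eta>" using Cfg_t(2)[OF x] xe by auto
  have t: "oo + \<eta> \<le> n" using Cfg_t(1)[OF x] un by simp
  have "card (Sfix k n m (TO \<union> TE) (\<lambda>j. if j \<in> TO then g1 j else g2 j)) * ff n (card (TO \<union> TE))
        \<le> k ^ card (TO \<union> TE) * card (hypermatchings k n m)"
    by (rule core) (use T un in \<open>auto intro: fin_sub1\<close>)
  then have "real (card (SC k n m x)) * real (ff n (oo + \<eta>)) \<le> real k ^ (oo + \<eta>) * real (card (hypermatchings k n m))"
    using T by (simp add: xe SC_def) (metis of_nat_le_iff of_nat_mult of_nat_power)
  moreover have "real (ff n (oo + \<eta>)) > 0" using t by (auto simp: ff_def intro!: prod_pos)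
  ultimately show ?thesis by (simp add: le_divide_eq)
qed

lemma prob_bound:
  assumes f: "f \<in> test_vectors q n u" and k: "k \<ge> 1" and a: "0 < a" "a \<le> 1" and m: "real m \<le> a * real n"
  shows "event_prob k n m q f oo \<eta> \<kappa> \<le> real (u + 1) *
     (a powr ((real oo + real \<eta>) / real k) * (exp 6 * real k) ^ u
             * (real n / real \<kappa>) ^ \<kappa>
             * (real u / sqrt (real n * real \<eta>)) ^ \<eta>
             * (real u / real n) ^ oo)"
proof -
  define Bnd where "Bnd = a powr ((real oo + real \<eta>) / real k) * (exp 6 * real k) ^ u
             * (real n / real \<kappa>) ^ \<kappa>
             * (real u / sqrt (real n * real \<eta>)) ^ \<eta>
             * (real u / real n) ^ oo"
  have B0: "Bnd \<ge> 0" unfolding Bnd_def using a by auto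
  have un: "u \<le> n" using f by (simp add: test_vectors_def)
  define HM where "HM = hypermatchings k n m"
  define Ev where "Ev = {M \<in> HM. card (K_set q f M) = \<kappa> \<and> card (E_set q n f M) = \<eta> \<and> card (O_set q n f M) = oo}"
  define R where "R = {r. r \<le> \<eta> \<and> 2 * r \<le> \<eta> \<and> oo + \<eta> \<le> k * (\<kappa> + r)}"
  define t where "t = oo + \<eta>"
  have fR: "finite R" unfolding R_def by (rule finite_subset[of _ "{..\<eta>}"]) auto
  have sub: "Ev \<subseteq> (\<Union>r\<in>R. \<Union>x\<in>Cfg m u oo \<eta> \<kappa> r. SC k n m x)"
  proof
    fix M assume "M \<in> Ev"
    then have M: "M \<in> hypermatchings k n m" "card (K_set q f M) = \<kappa>" "card (E_set q n f M) = \<eta>"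
      "card (O_set q n f M) = oo" by (auto simp: Ev_def HM_def)
    from ev_subset[OF f M] obtain r x where rr: "2 * r \<le> \<eta>" "oo + \<eta> \<le> k * (\<kappa> + r)"
      and xx: "x \<in> Cfg m u oo \<eta> \<kappa> r" "M \<in> SC k n m x" by blast
    have "r \<in> R" unfolding R_def using rr by simp
    then show "M \<in> (\<Union>r\<in>R. \<Union>x\<in>Cfg m u oo \<eta> \<kappa> r. SC k n m x)" using xx by blast
  qed
  have fSC: "finite (SC k n m x)" for x
    by (rule finite_subset[OF _ finite_hm[of k n m]]) (auto simp: SC_def Sfix_def split: prod.splits)
  have "card Ev \<le> card (\<Union>r\<in>R. \<Union>x\<in>Cfg m u oo \<eta> \<kappa> r. SC k n m x)"
    by (rule card_mono[OF _ sub]) (use fR finite_Cfg fSC in auto)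
  also have "\<dots> \<le> (\<Sum>r\<in>R. card (\<Union>x\<in>Cfg m u oo \<eta> \<kappa> r. SC k n m x))" by (rule card_UN_le[OF fR])
  also have "\<dots> \<le> (\<Sum>r\<in>R. \<Sum>x\<in>Cfg m u oo \<eta> \<kappa> r. card (SC k n m x))"
    by (intro sum_mono card_UN_le finite_Cfg)
  finally have "real (card Ev) \<le> real (\<Sum>r\<in>R. \<Sum>x\<in>Cfg m u oo \<eta> \<kappa> r. card (SC k n m x))"
    by (simp only: of_nat_le_iff)
  also have "\<dots> = (\<Sum>r\<in>R. \<Sum>x\<in>Cfg m u oo \<eta> \<kappa> r. real (card (SC k n m x)))"
    by (simp only: of_nat_sum)
  also have "\<dots> \<le> (\<Sum>r\<in>R. real (card (Cfg m u oo \<eta> \<kappa> r)) * (real k ^ t * real (card HM) / real (ff n t)))"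
  proof (rule sum_mono)
    fix r
    have "(\<Sum>x\<in>Cfg m u oo \<eta> \<kappa> r. real (card (SC k n m x))) \<le> (\<Sum>x\<in>Cfg m u oo \<eta> \<kappa> r. real k ^ t * real (card HM) / real (ff n t))"
    proof (rule sum_mono)
      fix x assume "x \<in> Cfg m u oo \<eta> \<kappa> r"
      from SC_bound[OF this un, of k] show "real (card (SC k n m x)) \<le> real k ^ t * real (card HM) / real (ff n t)"
        by (simp only: t_def HM_def)
    qed
    then show "(\<Sum>x\<in>Cfg m u oo \<eta> \<kappa> r. real (card (SC k n m x))) \<le> real (card (Cfg m u oo \<eta> \<kappa> r)) * (real k ^ t * real (card HM) / real (ff n t))"
      by simp
  qed
  finally have cE1: "real (card Ev) \<le> (\<Sum>r\<in>R. real (card (Cfg m u oo \<eta> \<kappa> r)) * (real k ^ t * real (card HM) / real (ff n t)))" .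
  have eqr: "\<And>r. real (card (Cfg m u oo \<eta> \<kappa> r)) * (real k ^ t * real (card HM) / real (ff n t))
       = real (card HM) * (real (card (Cfg m u oo \<eta> \<kappa> r)) * (real k ^ t / real (ff n t)))" by simp
  have cE2: "real (card Ev) \<le> real (card HM) * (\<Sum>r\<in>R. real (card (Cfg m u oo \<eta> \<kappa> r)) * (real k ^ t / real (ff n t)))"
    using cE1 unfolding eqr sum_distrib_left[symmetric] .
  have tmb: "real (card (Cfg m u oo \<eta> \<kappa> r)) * (real k ^ t / real (ff n t)) \<le> (if oo + \<eta> \<le> u then Bnd else 0)"
    if r: "r \<in> R" for r
  proof (cases "oo + \<eta> \<le> u \<and> Cfg m u oo \<eta> \<kappa> r \<noteq> {}")
    case False
    then have "Cfg m u oo \<eta> \<kappa> r = {}" using Cfg_t(1) by blast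
    then show ?thesis using B0 by simp
  next
    case True
    then obtain x where x: "x \<in> Cfg m u oo \<eta> \<kappa> r" by blast
    obtain TO TE g1 g2 where xe: "x = (TO, TE, g1, g2)" by (metis prod_cases4)
    have TO: "TO \<subseteq> {1..u}" "card TO = oo" "g1 \<in> Fn m TO \<kappa>" using x by (auto simp: xe Cfg_def)
    have ko: "\<kappa> \<le> oo" using TO card_image_le[OF fin_sub1[OF TO(1)], of g1] by (simp add: Fn_def)
    have rr: "2 * r \<le> \<eta>" "oo + \<eta> \<le> k * (\<kappa> + r)" using r by (auto simp: R_def)
    have "real (card (Cfg m u oo \<eta> \<kappa> r)) \<le> real ((u choose oo) * (u choose \<eta>) * ((m choose \<kappa>) * \<kappa> ^ oo) * ((m choose r) * r ^ \<eta>))"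
      by (simp only: of_nat_le_iff card_Cfg)
    then have "real (card (Cfg m u oo \<eta> \<kappa> r)) * (real k ^ t / real (ff n t))
       \<le> real ((u choose oo) * (u choose \<eta>) * ((m choose \<kappa>) * \<kappa> ^ oo) * ((m choose r) * r ^ \<eta>)) * (real k ^ t / real (ff n t))"
      by (rule mult_right_mono) simp
    also have "\<dots> = real (u choose oo) * real \<kappa> ^ oo * real (m choose \<kappa>) * (real (u choose \<eta>) * real r ^ \<eta>)
           * real (m choose r) * (real k ^ (oo + \<eta>) / real (ff n (oo + \<eta>)))"
      by (simp add: t_def)
    also have "\<dots> \<le> Bnd" unfolding Bnd_def
      by (rule analytic[OF a m k ko rr(1) _ un rr(2)]) (use True in simp)
    finally show ?thesis using True by simp
  qed
  have sumR: "(\<Sum>r\<in>R. real (card (Cfg m u oo \<eta> \<kappa> r)) * (real k ^ t / real (ff n t))) \<le> real (u + 1) * Bnd"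
  proof (cases "oo + \<eta> \<le> u")
    case False
    have "(\<Sum>r\<in>R. real (card (Cfg m u oo \<eta> \<kappa> r)) * (real k ^ t / real (ff n t))) \<le> (\<Sum>r\<in>R. 0)"
      by (rule sum_mono) (use tmb False in auto)
    moreover have "0 \<le> real (u + 1) * Bnd" using B0 by simp
    ultimately show ?thesis by simp
  next
    case True
    have "(\<Sum>r\<in>R. real (card (Cfg m u oo \<eta> \<kappa> r)) * (real k ^ t / real (ff n t))) \<le> (\<Sum>r\<in>R. Bnd)"
      by (rule sum_mono) (use tmb True in auto)
    also have "\<dots> = real (card R) * Bnd" by simp
    also have "\<dots> \<le> real (u + 1) * Bnd"
    proof (rule mult_right_mono[OF _ B0])
      have "card R \<le> card {..\<eta>}" by (rule card_mono) (auto simp: R_def)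
      then show "real (card R) \<le> real (u + 1)" using True by simp
    qed
    finally show ?thesis .
  qed
  show ?thesis
  proof (cases "card HM = 0")
    case True
    then show ?thesis using B0 by (simp add: event_prob_def HM_def Bnd_def[symmetric])
  next
    case False
    have "event_prob k n m q f oo \<eta> \<kappa> = real (card Ev) / real (card HM)"
      by (simp add: event_prob_def Ev_def HM_def)
    also have "\<dots> \<le> (\<Sum>r\<in>R. real (card (Cfg m u oo \<eta> \<kappa> r)) * (real k ^ t / real (ff n t)))"
      using cE2 False by (simp add: divide_le_eq mult.commute)
    also have "\<dots> \<le> real (u + 1) * Bnd" by (rule sumR)
    finally show ?thesis by (simp add: Bnd_def)
  qed
qed

lemma finite_tv: "finite (test_vectors q n u)"
proof -
  have inj: "inj_on (\<lambda>f. restrict f {1..u}) (test_vectors q n u)"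
  proof (rule inj_onI)
    fix f g assume f: "f \<in> test_vectors q n u" and g: "g \<in> test_vectors q n u"
      and e: "restrict f {1..u} = restrict g {1..u}"
    show "f = g"
    proof
      fix j show "f j = g j"
      proof (cases "j \<in> {1..u}")
        case True then show ?thesis using fun_cong[OF e, of j] by simp
      next
        case False then show ?thesis using f g by (auto simp: test_vectors_def)
      qed
    qed
  qed
  have "(\<lambda>f. restrict f {1..u}) ` test_vectors q n u \<subseteq> {1..u} \<rightarrow>\<^sub>E {1..int q - 1}"
    by (auto simp: test_vectors_def)
  moreover have "finite ({1..u} \<rightarrow>\<^sub>E {1..int q - 1})" by (intro finite_PiE) auto
  ultimately have "finite ((\<lambda>f. restrict f {1..u}) ` test_vectors q n u)" by (rule finite_subset)
  then show ?thesis using inj by (rule finite_imageD)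
qed

theorem lemma6p12:
  fixes k :: nat
  assumes "k \<ge> 2"
  shows "\<exists>C::real > 0. \<forall>q::nat. \<forall>\<alpha>::real. \<forall>n u oo \<eta> \<kappa> :: nat.
           q \<ge> 2 \<and> 0 < \<alpha> \<and> \<alpha> < 1 / real k \<and> \<alpha> * real n \<in> \<nat> \<longrightarrow>
           p_q k \<alpha> q n u oo \<eta> \<kappa> \<le>
             \<alpha> powr ((real oo + real \<eta>) / real k) * C ^ u
             * (real n / real \<kappa>) ^ \<kappa>
             * (real u / sqrt (real n * real \<eta>)) ^ \<eta>
             * (real u / real n) ^ oo"
proof (intro exI[of _ "2 * exp 6 * real k"] conjI allI impI)
  show "0 < 2 * exp 6 * real k" using assms by simp
  fix q :: nat and \<alpha> :: real and n u oo \<eta> \<kappa> :: nat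
  assume h: "2 \<le> q \<and> 0 < \<alpha> \<and> \<alpha> < 1 / real k \<and> \<alpha> * real n \<in> \<nat>"
  have k1: "k \<ge> 1" using assms by simp
  have a: "0 < \<alpha>" "\<alpha> \<le> 1"
  proof -
    show "0 < \<alpha>" using h by simp
    have "1 / real k \<le> 1" using k1 by simp
    then show "\<alpha> \<le> 1" using h by simp
  qed
  define m where "m = nat \<lfloor>\<alpha> * real n\<rfloor>"
  have m: "real m \<le> \<alpha> * real n"
  proof -
    have "0 \<le> \<alpha> * real n" using a by simp
    then show ?thesis unfolding m_def by linarith
  qed
  define Rest where "Rest = \<alpha> powr ((real oo + real \<eta>) / real k) * (exp 6 * real k) ^ u
             * (real n / real \<kappa>) ^ \<kappa>
             * (real u / sqrt (real n * real \<eta>)) ^ \<eta>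
             * (real u / real n) ^ oo"
  have R0: "Rest \<ge> 0" unfolding Rest_def using a by simp
  have fin: "real (u + 1) * Rest \<le> \<alpha> powr ((real oo + real \<eta>) / real k) * (2 * exp 6 * real k) ^ u
             * (real n / real \<kappa>) ^ \<kappa>
             * (real u / sqrt (real n * real \<eta>)) ^ \<eta>
             * (real u / real n) ^ oo"
  proof -
    have "real (u + 1) \<le> 2 ^ u"
    proof -
      have "u + 1 \<le> 2 ^ u" by (induction u) auto
      then show ?thesis by (metis of_nat_le_iff of_nat_numeral of_nat_power)
    qed
    then have "real (u + 1) * Rest \<le> 2 ^ u * Rest" by (rule mult_right_mono[OF _ R0])
    also have "\<dots> = \<alpha> powr ((real oo + real \<eta>) / real k) * (2 * exp 6 * real k) ^ u
             * (real n / real \<kappa>) ^ \<kappa>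
             * (real u / sqrt (real n * real \<eta>)) ^ \<eta>
             * (real u / real n) ^ oo"
      unfolding Rest_def by (simp add: power_mult_distrib ac_simps)
    finally show ?thesis .
  qed
  have each: "event_prob k n (nat \<lfloor>\<alpha> * real n\<rfloor>) q f oo \<eta> \<kappa> \<le> real (u + 1) * Rest"
    if f: "f \<in> test_vectors q n u" for f
    unfolding Rest_def m_def[symmetric] by (rule prob_bound[OF f k1 a m])
  have "p_q k \<alpha> q n u oo \<eta> \<kappa> \<le> real (u + 1) * Rest"
    unfolding p_q_def
  proof (rule Max.boundedI)
    show "finite (insert 0 ((\<lambda>f. event_prob k n (nat \<lfloor>\<alpha> * real n\<rfloor>) q f oo \<eta> \<kappa>) ` test_vectors q n u))"
      using finite_tv by simp
  next
    fix x assume "x \<in> insert 0 ((\<lambda>f. event_prob k n (nat \<lfloor>\<alpha> * real n\<rfloor>) q f oo \<eta> \<kappa>) ` test_vectors q n u)"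
    then show "x \<le> real (u + 1) * Rest" using each R0 by auto
  qed simp
  with fin show "p_q k \<alpha> q n u oo \<eta> \<kappa> \<le> \<alpha> powr ((real oo + real \<eta>) / real k) * (2 * exp 6 * real k) ^ u
             * (real n / real \<kappa>) ^ \<kappa>
             * (real u / sqrt (real n * real \<eta>)) ^ \<eta>
             * (real u / real n) ^ oo" by linarith
qed

end
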